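(* Let $X$ be an $E\mathcal M$-simplicial set, $x\in X_n$, and $u_0,\dots,u_n\in\mathcal M$. Then for each $0\le k\le n$, $(u_0,\dots,u_n).x$ is $k$-supported on $\mathrm{im}(u_k)$. Moreover, if $x$ is $k$-supported on some co-infinite set $A$, then $(u_0,\dots,u_n).x$ is $k$-supported on $u_k(A)$.
   Context: $\omega=\{1,2,\dots\}$, $\mathcal M$ the monoid of injections $\omega\to\omega$, $\mathcal M_A$ the submonoid fixing $A\subset\omega$ elementwise; $A$ co-infinite if $\omega\setminus A$ is infinite. $E\mathcal M$ is the simplicial monoid with $(E\mathcal M)_n=\mathcal M^{1+n}$, pointwise multiplication, structure maps by precomposition; an $E\mathcal M$-simplicial set is a simplicial set with left $E\mathcal M$-action. $x\in X_n$ is $k$-supported on $A$ if $i_k(g).x=x$ for all $g\in\mathcal M_A$, where $i_k\colon\mathcal M\to\mathcal M^{1+n}$ is the inclusion of the $(1+k)$-th factor. *)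

theory Defs
  imports Main
begin

text \<open>Injections omega -> omega are represented as functions
  nat => nat that are injective on omega, map omega into omega, and send the
  junk point 0 to 0 (so that each injection has a unique representative).\<close>

definition omega :: "nat set" where
  "omega = {1..}"

definition Mon :: "(nat \<Rightarrow> nat) set" where
  "Mon = {f. inj_on f omega \<and> f ` omega \<subseteq> omega \<and> f 0 = 0}"

definition Mon_fix :: "nat set \<Rightarrow> (nat \<Rightarrow> nat) set" where
  "Mon_fix A = {g \<in> Mon. \<forall>a\<in>A. g a = a}"

definition EM_n :: "nat \<Rightarrow> (nat \<Rightarrow> nat) list set" where
  "EM_n n = {us. length us = Suc n \<and> set us \<subseteq> Mon}"

definition incl :: "nat \<Rightarrow> nat \<Rightarrow> (nat \<Rightarrow> nat) \<Rightarrow> (nat \<Rightarrow> nat) list" where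
  "incl n k g = (replicate (Suc n) id)[k := g]"

definition simplicial_set ::
  "(nat \<Rightarrow> 'x set) \<Rightarrow> (nat \<Rightarrow> nat \<Rightarrow> 'x \<Rightarrow> 'x) \<Rightarrow> (nat \<Rightarrow> nat \<Rightarrow> 'x \<Rightarrow> 'x) \<Rightarrow> bool" where
  "simplicial_set X d s \<longleftrightarrow>
     (\<forall>n i x. 1 \<le> n \<and> i \<le> n \<and> x \<in> X n \<longrightarrow> d n i x \<in> X (n - 1)) \<and>
     (\<forall>n i x. i \<le> n \<and> x \<in> X n \<longrightarrow> s n i x \<in> X (Suc n)) \<and>
     (\<forall>n i j x. 2 \<le> n \<and> i < j \<and> j \<le> n \<and> x \<in> X n \<longrightarrow>
        d (n - 1) i (d n j x) = d (n - 1) (j - 1) (d n i x)) \<and>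
     (\<forall>n i j x. 1 \<le> n \<and> i < j \<and> j \<le> n \<and> x \<in> X n \<longrightarrow>
        d (Suc n) i (s n j x) = s (n - 1) (j - 1) (d n i x)) \<and>
     (\<forall>n j x. j \<le> n \<and> x \<in> X n \<longrightarrow>
        d (Suc n) j (s n j x) = x \<and> d (Suc n) (Suc j) (s n j x) = x) \<and>
     (\<forall>n i j x. 1 \<le> n \<and> Suc j < i \<and> i \<le> Suc n \<and> x \<in> X n \<longrightarrow>
        d (Suc n) i (s n j x) = s (n - 1) j (d n (i - 1) x)) \<and>
     (\<forall>n i j x. i \<le> j \<and> j \<le> n \<and> x \<in> X n \<longrightarrow>
        s (Suc n) i (s n j x) = s (Suc n) (Suc j) (s n i x))"

text \<open>An EM-simplicial set: a simplicial set with a left action of the simplicial monoid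
  EM, i.e. levelwise monoid actions of M^(1+n) on X n (pointwise multiplication)
  compatible with the structure maps, which act on EM by precomposition
  (face d_i deletes the i-th entry, degeneracy s_i repeats the i-th entry).\<close>

definition EM_sset ::
  "(nat \<Rightarrow> 'x set) \<Rightarrow> (nat \<Rightarrow> nat \<Rightarrow> 'x \<Rightarrow> 'x) \<Rightarrow> (nat \<Rightarrow> nat \<Rightarrow> 'x \<Rightarrow> 'x)
   \<Rightarrow> (nat \<Rightarrow> (nat \<Rightarrow> nat) list \<Rightarrow> 'x \<Rightarrow> 'x) \<Rightarrow> bool" where
  "EM_sset X d s act \<longleftrightarrow>
     simplicial_set X d s \<and>
     (\<forall>n us x. us \<in> EM_n n \<and> x \<in> X n \<longrightarrow> act n us x \<in> X n) \<and>
     (\<forall>n x. x \<in> X n \<longrightarrow> act n (replicate (Suc n) id) x = x) \<and>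
     (\<forall>n us vs x. us \<in> EM_n n \<and> vs \<in> EM_n n \<and> x \<in> X n \<longrightarrow>
        act n us (act n vs x) = act n (map2 (\<circ>) us vs) x) \<and>
     (\<forall>n i us x. 1 \<le> n \<and> i \<le> n \<and> us \<in> EM_n n \<and> x \<in> X n \<longrightarrow>
        d n i (act n us x) = act (n - 1) (take i us @ drop (Suc i) us) (d n i x)) \<and>
     (\<forall>n i us x. i \<le> n \<and> us \<in> EM_n n \<and> x \<in> X n \<longrightarrow>
        s n i (act n us x) = act (Suc n) (take (Suc i) us @ drop i us) (s n i x))"

definition k_supported ::
  "(nat \<Rightarrow> (nat \<Rightarrow> nat) list \<Rightarrow> 'x \<Rightarrow> 'x) \<Rightarrow> nat \<Rightarrow> nat \<Rightarrow> nat set \<Rightarrow> 'x \<Rightarrow> bool" where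
  "k_supported act n k A x \<longleftrightarrow> (\<forall>g \<in> Mon_fix A. act n (incl n k g) x = x)"

end

theory Submission
  imports Defs "HOL-Library.Infinite_Set"
begin

lemma nat_inf_bij:
  fixes S T :: "nat set"
  assumes "infinite S" "infinite T"
  shows "\<exists>f. bij_betw f S T"
proof -
  have 1: "bij_betw (enumerate S) UNIV S" by (rule bij_enumerate[OF assms(1)])
  have 2: "bij_betw (enumerate T) UNIV T" by (rule bij_enumerate[OF assms(2)])
  have "bij_betw (inv_into UNIV (enumerate S)) S UNIV" by (rule bij_betw_inv_into[OF 1])
  then have "bij_betw (enumerate T \<circ> inv_into UNIV (enumerate S)) S T"
    using 2 by (rule bij_betw_trans)
  then show ?thesis by blast
qed

lemma id_Mon: "id \<in> Mon"
  by (auto simp: Mon_def)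

lemma comp_Mon: "a \<in> Mon \<Longrightarrow> b \<in> Mon \<Longrightarrow> a \<circ> b \<in> Mon"
  unfolding Mon_def by (auto intro: comp_inj_on inj_on_subset)

lemma Mon_0: "a \<in> Mon \<Longrightarrow> a 0 = 0"
  by (simp add: Mon_def)

lemma not_omega: "y \<notin> omega \<Longrightarrow> y = 0"
  by (simp add: omega_def)

lemma incl_length[simp]: "length (incl n k g) = Suc n"
  by (simp add: incl_def del: replicate_Suc)

lemma incl_nth: "i \<le> n \<Longrightarrow> incl n k g ! i = (if i = k then g else id)"
  by (simp add: incl_def nth_list_update del: replicate_Suc)

lemma map2_incl_left:
  assumes "length vs = Suc n" "k \<le> n"
  shows "map2 (\<circ>) (incl n k g) vs = vs[k := g \<circ> vs ! k]"
  using assms by (intro nth_equalityI) (auto simp: incl_nth nth_list_update)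

lemma map2_incl_right:
  assumes "length vs = Suc n" "k \<le> n"
  shows "map2 (\<circ>) vs (incl n k g) = vs[k := vs ! k \<circ> g]"
  using assms by (intro nth_equalityI) (auto simp: incl_nth nth_list_update)

lemma incl_EM: "g \<in> Mon \<Longrightarrow> incl n k g \<in> EM_n n"
proof -
  assume g: "g \<in> Mon"
  have "set (incl n k g) \<subseteq> insert g (set (replicate (Suc n) id))"
    unfolding incl_def by (rule set_update_subset_insert)
  then show ?thesis using g id_Mon by (auto simp: EM_n_def simp del: replicate_Suc)
qed

lemma upd_EM: "us \<in> EM_n n \<Longrightarrow> a \<in> Mon \<Longrightarrow> us[k := a] \<in> EM_n n"
  unfolding EM_n_def by (auto dest!: set_update_subset_insert[THEN subsetD])

lemma nth_EM: "us \<in> EM_n n \<Longrightarrow> k \<le> n \<Longrightarrow> us ! k \<in> Mon"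
  unfolding EM_n_def by auto

lemma EM_comp:
  assumes "EM_sset X d s act" "us \<in> EM_n n" "vs \<in> EM_n n" "x \<in> X n"
  shows "act n us (act n vs x) = act n (map2 (\<circ>) us vs) x"
proof -
  have "\<forall>n us vs x. us \<in> EM_n n \<and> vs \<in> EM_n n \<and> x \<in> X n \<longrightarrow>
        act n us (act n vs x) = act n (map2 (\<circ>) us vs) x"
    using assms(1) unfolding EM_sset_def by blast
  then show ?thesis using assms(2-4) by blast
qed

lemma act_incl:
  assumes "EM_sset X d s act" "x \<in> X n" "us \<in> EM_n n" "k \<le> n" "g \<in> Mon"
  shows "act n (incl n k g) (act n us x) = act n (us[k := g \<circ> us ! k]) x"
proof -
  have "act n (incl n k g) (act n us x) = act n (map2 (\<circ>) (incl n k g) us) x"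
    using EM_comp[OF assms(1) incl_EM[OF assms(5)] assms(3,2)] .
  also have "\<dots> = act n (us[k := g \<circ> us ! k]) x"
    using assms(3,4) by (simp add: map2_incl_left EM_n_def)
  finally show ?thesis .
qed

lemma act_pre:
  assumes "EM_sset X d s act" "x \<in> X n" "us \<in> EM_n n" "k \<le> n" "a \<in> Mon"
    and "h \<in> Mon_fix A" "k_supported act n k A x"
  shows "act n (us[k := a \<circ> h]) x = act n (us[k := a]) x"
proof -
  have h: "h \<in> Mon" using assms(6) by (simp add: Mon_fix_def)
  have L: "length us = Suc n" using assms(3) by (simp add: EM_n_def)
  have "us[k := a \<circ> h] = map2 (\<circ>) (us[k := a]) (incl n k h)"
    using L assms(4) by (simp add: map2_incl_right)
  then have "act n (us[k := a \<circ> h]) x = act n (us[k := a]) (act n (incl n k h) x)"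
    using EM_comp[OF assms(1) upd_EM[OF assms(3,5)] incl_EM[OF h] assms(2)] by simp
  also have "act n (incl n k h) x = x"
    using assms(6,7) by (simp add: k_supported_def)
  finally show ?thesis .
qed

lemma mk_h:
  assumes f: "f \<in> Mon" and A: "A \<subseteq> omega"
    and e: "inj_on e (omega - A)" "e ` (omega - A) \<subseteq> f ` (omega - A)"
  defines "h \<equiv> (\<lambda>y. if y \<in> omega - A then inv_into omega f (e y) else y)"
  shows "h \<in> Mon_fix A \<and> (\<forall>y \<in> omega - A. f (h y) = e y)"
proof -
  have injf: "inj_on f omega" using f by (simp add: Mon_def)
  have hB: "h y \<in> omega - A \<and> f (h y) = e y" if "y \<in> omega - A" for y
  proof -
    have ey: "e y \<in> f ` (omega - A)" using that by (intro subsetD[OF e(2)] imageI)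
    obtain z where z: "z \<in> omega - A" "e y = f z" using ey by (rule imageE)
    have zo: "z \<in> omega" using z(1) by blast
    have iz: "inv_into omega f (f z) = z" by (rule inv_into_f_f[OF injf zo])
    have "h y = inv_into omega f (e y)" using that unfolding h_def by (simp only: if_True)
    then have "h y = z" using iz z(2) by simp
    then show ?thesis using z by simp
  qed
  have "inj_on h omega"
  proof (rule inj_onI)
    fix y z assume yz: "y \<in> omega" "z \<in> omega" "h y = h z"
    show "y = z"
    proof (cases "y \<in> A")
      case True
      then show ?thesis
      proof (cases "z \<in> A")
        case True then show ?thesis using yz \<open>y \<in> A\<close> by (simp add: h_def)
      next
        case False
        then have "h z \<in> omega - A" using hB yz by auto
        moreover have "h y = y" using \<open>y \<in> A\<close> by (simp add: h_def)
        ultimately show ?thesis using yz \<open>y \<in> A\<close> by auto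
      qed
    next
      case False
      then have yB: "y \<in> omega - A" using yz by auto
      show ?thesis
      proof (cases "z \<in> A")
        case True
        then have "h z = z" by (simp add: h_def)
        then show ?thesis using hB[OF yB] yz True by auto
      next
        case False
        then have zB: "z \<in> omega - A" using yz by auto
        have "e y = e z" using hB[OF yB] hB[OF zB] yz by metis
        then show ?thesis using e(1) yB zB by (meson inj_onD)
      qed
    qed
  qed
  moreover have "h ` omega \<subseteq> omega" using hB by (auto simp: h_def)
  moreover have "h 0 = 0" by (simp add: h_def omega_def)
  moreover have "\<forall>a\<in>A. h a = a" by (simp add: h_def)
  ultimately show ?thesis using hB by (simp add: Mon_fix_def Mon_def)
qed

lemma L1:
  assumes a: "a \<in> Mon" and c: "c \<in> Mon" and A: "A \<subseteq> omega"
    and B: "infinite (omega - A)" and ac: "\<forall>y\<in>A. a y = c y"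
    and W: "infinite (a ` (omega - A) \<inter> c ` (omega - A))"
  shows "\<exists>h1 h2. h1 \<in> Mon_fix A \<and> h2 \<in> Mon_fix A \<and> a \<circ> h1 = c \<circ> h2"
proof -
  obtain e where e: "bij_betw e (omega - A) (a ` (omega - A) \<inter> c ` (omega - A))"
    using nat_inf_bij[OF B W] by blast
  have ei: "inj_on e (omega - A)" using e by (simp add: bij_betw_def)
  have ea: "e ` (omega - A) \<subseteq> a ` (omega - A)" and ec: "e ` (omega - A) \<subseteq> c ` (omega - A)"
    using e by (auto simp: bij_betw_def)
  obtain h1 where h1: "h1 \<in> Mon_fix A" "\<forall>y \<in> omega - A. a (h1 y) = e y"
    using mk_h[OF a A ei ea] by blast
  obtain h2 where h2: "h2 \<in> Mon_fix A" "\<forall>y \<in> omega - A. c (h2 y) = e y"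
    using mk_h[OF c A ei ec] by blast
  have "a \<circ> h1 = c \<circ> h2"
  proof
    fix y
    show "(a \<circ> h1) y = (c \<circ> h2) y"
    proof (cases "y \<in> omega - A")
      case True then show ?thesis using h1 h2 by simp
    next
      case False
      then consider "y \<in> A" | "y = 0" using not_omega by blast
      then show ?thesis
      proof cases
        case 1 then show ?thesis using h1 h2 ac by (simp add: Mon_fix_def)
      next
        case 2 then show ?thesis using h1 h2 a c by (simp add: Mon_fix_def Mon_def)
      qed
    qed
  qed
  then show ?thesis using h1 h2 by blast
qed

lemma L2:
  assumes a: "a \<in> Mon" and b: "b \<in> Mon" and A: "A \<subseteq> omega"
    and B: "infinite (omega - A)" and ab: "\<forall>y\<in>A. a y = b y"
  shows "\<exists>c \<in> Mon. (\<forall>y\<in>A. c y = a y) \<and> c ` (omega - A) = a ` (omega - A) \<union> b ` (omega - A)"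
proof -
  let ?B = "omega - A"
  let ?T = "a ` ?B \<union> b ` ?B"
  have ia: "inj_on a omega" and ib: "inj_on b omega" using a b by (auto simp: Mon_def)
  have "infinite (a ` ?B)" using B ia by (metis Diff_subset finite_imageD inj_on_subset)
  then have T: "infinite ?T" by simp
  obtain phi where phi: "bij_betw phi ?B ?T" using nat_inf_bij[OF B T] by blast
  define c where "c = (\<lambda>y. if y \<in> ?B then phi y else a y)"
  have disj: "?T \<inter> a ` A = {}"
  proof -
    have "a ` ?B \<inter> a ` A = {}" using ia A by (auto dest: inj_onD)
    moreover have "b ` ?B \<inter> b ` A = {}" using ib A by (auto dest: inj_onD)
    moreover have "b ` A = a ` A" using ab by (auto simp: image_def)
    ultimately show ?thesis by auto
  qed
  have "inj_on c omega"
  proof (rule inj_onI)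
    fix y z assume yz: "y \<in> omega" "z \<in> omega" "c y = c z"
    show "y = z"
    proof (cases "y \<in> A"; cases "z \<in> A")
      assume "y \<in> A" "z \<in> A" then show ?thesis using yz ia by (simp add: c_def inj_on_def)
    next
      assume "y \<notin> A" "z \<notin> A" then show ?thesis using yz phi
        by (simp add: c_def bij_betw_def inj_on_def)
    next
      assume "y \<in> A" "z \<notin> A"
      then have "c z \<in> ?T" using yz(2) phi by (auto simp: c_def bij_betw_def)
      moreover have "c y \<in> a ` A" using \<open>y \<in> A\<close> by (simp add: c_def)
      ultimately show ?thesis using yz disj by auto
    next
      assume "y \<notin> A" "z \<in> A"
      then have "c y \<in> ?T" using yz(1) phi by (auto simp: c_def bij_betw_def)
      moreover have "c z \<in> a ` A" using \<open>z \<in> A\<close> by (simp add: c_def)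
      ultimately show ?thesis using yz disj by auto
    qed
  qed
  moreover have "c ` omega \<subseteq> omega"
  proof -
    have "?T \<subseteq> omega" using a b by (auto simp: Mon_def)
    then have "phi ` ?B \<subseteq> omega" using phi by (simp add: bij_betw_def)
    moreover have "a ` omega \<subseteq> omega" using a by (simp add: Mon_def)
    ultimately show ?thesis by (force simp: c_def)
  qed
  moreover have "c 0 = 0" using a by (simp add: c_def omega_def Mon_def)
  moreover have "\<forall>y\<in>A. c y = a y" by (simp add: c_def)
  moreover have "c ` ?B = ?T" using phi by (simp add: c_def bij_betw_def)
  ultimately show ?thesis by (auto simp: Mon_def)
qed

lemma F_eq:
  assumes EM: "EM_sset X d s act" and x: "x \<in> X n" and us: "us \<in> EM_n n" and k: "k \<le> n"
    and A: "A \<subseteq> omega" "infinite (omega - A)" and sup: "k_supported act n k A x"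
    and a: "a \<in> Mon" and b: "b \<in> Mon" and ab: "\<forall>y\<in>A. a y = b y"
  shows "act n (us[k := a]) x = act n (us[k := b]) x"
proof -
  have step: "act n (us[k := f1]) x = act n (us[k := f2]) x"
    if f: "f1 \<in> Mon" "f2 \<in> Mon" "\<forall>y\<in>A. f1 y = f2 y"
      "infinite (f1 ` (omega - A) \<inter> f2 ` (omega - A))" for f1 f2
  proof -
    obtain h1 h2 where h: "h1 \<in> Mon_fix A" "h2 \<in> Mon_fix A" "f1 \<circ> h1 = f2 \<circ> h2"
      using L1[OF f(1,2) A f(3,4)] by blast
    have "act n (us[k := f1]) x = act n (us[k := f1 \<circ> h1]) x"
      using act_pre[OF EM x us k f(1) h(1) sup] by simp
    also have "\<dots> = act n (us[k := f2 \<circ> h2]) x" using h(3) by simp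
    also have "\<dots> = act n (us[k := f2]) x"
      using act_pre[OF EM x us k f(2) h(2) sup] by simp
    finally show ?thesis .
  qed
  obtain c where c: "c \<in> Mon" "\<forall>y\<in>A. c y = a y"
    "c ` (omega - A) = a ` (omega - A) \<union> b ` (omega - A)"
    using L2[OF a b A ab] by blast
  have ia: "inj_on a omega" and ib: "inj_on b omega" using a b by (auto simp: Mon_def)
  have infa: "infinite (a ` (omega - A))" using A(2) ia by (metis Diff_subset finite_imageD inj_on_subset)
  have infb: "infinite (b ` (omega - A))" using A(2) ib by (metis Diff_subset finite_imageD inj_on_subset)
  have e1: "a ` (omega - A) \<inter> c ` (omega - A) = a ` (omega - A)" using c(3) by blast
  have e2: "c ` (omega - A) \<inter> b ` (omega - A) = b ` (omega - A)" using c(3) by blast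
  have q1: "\<forall>y\<in>A. a y = c y" using c(2) by simp
  have q2: "\<forall>y\<in>A. c y = b y" using c(2) ab by simp
  have "act n (us[k := a]) x = act n (us[k := c]) x"
    by (rule step[OF a c(1) q1]) (simp add: e1 infa)
  also have "\<dots> = act n (us[k := b]) x"
    by (rule step[OF c(1) b q2]) (simp add: e2 infb)
  finally show ?thesis .
qed

theorem lemma2p5:
  fixes X :: "nat \<Rightarrow> 'x set"
    and d s :: "nat \<Rightarrow> nat \<Rightarrow> 'x \<Rightarrow> 'x"
    and act :: "nat \<Rightarrow> (nat \<Rightarrow> nat) list \<Rightarrow> 'x \<Rightarrow> 'x"
    and n k :: nat and x :: 'x and us :: "(nat \<Rightarrow> nat) list"
  assumes "EM_sset X d s act"
    and "x \<in> X n"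
    and "us \<in> EM_n n"
    and "k \<le> n"
  shows "k_supported act n k ((us ! k) ` omega) (act n us x)
         \<and> (\<forall>A. A \<subseteq> omega \<and> infinite (omega - A) \<and> k_supported act n k A x
               \<longrightarrow> k_supported act n k ((us ! k) ` A) (act n us x))"
proof -
  have u: "us ! k \<in> Mon" using nth_EM[OF assms(3,4)] .
  have L: "length us = Suc n" using assms(3) by (simp add: EM_n_def)
  have P1: "k_supported act n k ((us ! k) ` omega) (act n us x)"
    unfolding k_supported_def
  proof
    fix g assume g: "g \<in> Mon_fix ((us ! k) ` omega)"
    have gM: "g \<in> Mon" using g by (simp add: Mon_fix_def)
    have "g \<circ> us ! k = us ! k"
    proof
      fix y show "(g \<circ> us ! k) y = (us ! k) y"
      proof (cases "y \<in> omega")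
        case True then show ?thesis using g by (simp add: Mon_fix_def)
      next
        case False then have "y = 0" by (rule not_omega)
        then show ?thesis using u gM by (simp add: Mon_0)
      qed
    qed
    then show "act n (incl n k g) (act n us x) = act n us x"
      using act_incl[OF assms gM] by simp
  qed
  have P2: "k_supported act n k ((us ! k) ` A) (act n us x)"
    if A: "A \<subseteq> omega" "infinite (omega - A)" "k_supported act n k A x" for A
    unfolding k_supported_def
  proof
    fix g assume g: "g \<in> Mon_fix ((us ! k) ` A)"
    have gM: "g \<in> Mon" using g by (simp add: Mon_fix_def)
    have "act n (incl n k g) (act n us x) = act n (us[k := g \<circ> us ! k]) x"
      using act_incl[OF assms gM] .
    also have "\<dots> = act n (us[k := us ! k]) x"
      using F_eq[OF assms A comp_Mon[OF gM u] u] g by (simp add: Mon_fix_def)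
    also have "\<dots> = act n us x" by simp
    finally show "act n (incl n k g) (act n us x) = act n us x" .
  qed
  show ?thesis using P1 P2 by simp
qed

end
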